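(* Let $\mathrm{X}=(X_n)_{n\ge1}$ be a sequence of random variables in $\mathbb{T}$, each distributed according to Lebesgue measure (no assumption on their joint law), and let $\mathrm{r}=(r_n)_{n\ge1}$ be a sequence of reals in $(0,1]$. Let $G$ be a nonempty compact subset of $\mathbb{T}$ and let $g$ be a doubling gauge function with $P^g(G)<\infty$. Then: (1) if $\sum_{n=1}^\infty \frac{r_n}{g(r_n)}<\infty$, then almost surely $\mathcal{E}(\mathrm{X},\mathrm{r})\cap G=\emptyset$; (2) for any doubling gauge function $h$, if $\sum_{n=1}^\infty\frac{h(r_n)r_n}{g(r_n)}<\infty$, then almost surely $\mathcal{H}^h(\mathcal{E}(\mathrm{X},\mathrm{r})\cap G)=0$.
   Context: $\mathbb{T}=\mathbb{R}/\mathbb{Z}$ with quotient distance $d$. $\mathcal{E}(\mathrm{X},\mathrm{r})=\{\xi\in\mathbb{T}: d(\xi,X_n)<r_n\text{ for infinitely many }n\ge1\}$. A gauge function is a nondecreasing right-continuous function on $[0,\infty)$ vanishing at zero and only at zero; it is doubling if $g(2r)\le Cg(r)$ for all $r>0$ and some $C>0$. $\mathcal{H}^h$ is the Hausdorff $h$-measure. The packing premeasure is $P^g(E)=\lim_{\delta\downarrow0}P^g_\delta(E)$, where $P^g_\delta(E)=\sup\sum_n g(\mathrm{diam}\,B_n)$, the supremum being over all sequences of disjoint closed balls (arcs) centered in $E$ with diameter less than $\delta$. *)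

theory Defs
  imports "HOL-Probability.Probability"
begin

text \<open>The circle T = R/Z is represented by the fundamental domain [0,1) of reals,
  equipped with the quotient distance (distance of x - y to the nearest integer).\<close>

definition torus :: "real set" where
  "torus = {0..<1}"

definition tdist :: "real \<Rightarrow> real \<Rightarrow> real" where
  "tdist x y = \<bar>x - y - of_int (round (x - y))\<bar>"

definition tdiam :: "real set \<Rightarrow> real" where
  "tdiam U = Sup (insert 0 {tdist x y | x y. x \<in> U \<and> y \<in> U})"

definition tcball :: "real \<Rightarrow> real \<Rightarrow> real set" where
  "tcball c \<rho> = {x \<in> torus. tdist x c \<le> \<rho>}"

text \<open>A subset of T (given by representatives in [0,1)) is compact in R/Z iff
  its full preimage under the quotient map R \<rightarrow> R/Z is closed.\<close>
definition torus_compact :: "real set \<Rightarrow> bool" where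
  "torus_compact G \<longleftrightarrow> G \<subseteq> torus \<and> closed {x + real_of_int k | x k. x \<in> G}"

definition gauge :: "(real \<Rightarrow> real) \<Rightarrow> bool" where
  "gauge g \<longleftrightarrow> mono_on {0..} g \<and> (\<forall>x\<ge>0. continuous (at_right x) g)
      \<and> g 0 = 0 \<and> (\<forall>x>0. g x \<noteq> 0)"

definition doubling :: "(real \<Rightarrow> real) \<Rightarrow> bool" where
  "doubling g \<longleftrightarrow> (\<exists>C>0. \<forall>r>0. g (2 * r) \<le> C * g r)"

definition limsup_set :: "(nat \<Rightarrow> real) \<Rightarrow> (nat \<Rightarrow> real) \<Rightarrow> real set" where
  "limsup_set x r = {\<xi> \<in> torus. infinite {n. tdist \<xi> (x n) < r n}}"

definition hausdorff_measure :: "(real \<Rightarrow> real) \<Rightarrow> real set \<Rightarrow> ennreal" where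
  "hausdorff_measure h E =
     (SUP \<delta>\<in>{0<..}. INF U \<in> {U :: nat \<Rightarrow> real set.
                 (\<forall>i. U i \<subseteq> torus \<and> tdiam (U i) \<le> \<delta>) \<and> E \<subseteq> (\<Union>i. U i)}.
        (\<Sum>i. ennreal (h (tdiam (U i)))))"

text \<open>P^g_delta: supremum over (finite or countable) sequences of disjoint closed balls
  centred in E with diameter less than delta.\<close>
definition packing_pre_delta :: "(real \<Rightarrow> real) \<Rightarrow> real \<Rightarrow> real set \<Rightarrow> ennreal" where
  "packing_pre_delta g \<delta> E =
     (SUP (I, c, \<rho>) \<in> {(I :: nat set, c :: nat \<Rightarrow> real, \<rho> :: nat \<Rightarrow> real).
              (\<forall>n\<in>I. c n \<in> E \<and> \<rho> n > 0 \<and> tdiam (tcball (c n) (\<rho> n)) < \<delta>) \<and>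
              (\<forall>m\<in>I. \<forall>n\<in>I. m \<noteq> n \<longrightarrow> tcball (c m) (\<rho> m) \<inter> tcball (c n) (\<rho> n) = {})}.
        (\<Sum>n. if n \<in> I then ennreal (g (tdiam (tcball (c n) (\<rho> n)))) else 0))"

definition packing_premeasure :: "(real \<Rightarrow> real) \<Rightarrow> real set \<Rightarrow> ennreal" where
  "packing_premeasure g E = (INF \<delta>\<in>{0<..}. packing_pre_delta g \<delta> E)"

end

theory Submission
  imports Defs
begin


lemma tdist_le: "tdist x y \<le> \<bar>x - y - of_int k\<bar>"
  unfolding tdist_def by (rule round_diff_minimal)

lemma tdist_nonneg: "0 \<le> tdist x y" by (simp add: tdist_def)

lemma tdist_less_iff: "tdist x y < s \<longleftrightarrow> (\<exists>k::int. \<bar>x - y - of_int k\<bar> < s)"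
  by (metis tdist_def tdist_le le_less_trans)

lemma tdist_le_iff: "tdist x y \<le> s \<longleftrightarrow> (\<exists>k::int. \<bar>x - y - of_int k\<bar> \<le> s)"
  by (metis tdist_def tdist_le order_trans)

lemma tdist_sym: "tdist x y = tdist y x"
proof -
  have "tdist y x \<le> tdist x y"
    using tdist_le[of y x "- round (x - y)"] unfolding tdist_def by (simp add: abs_minus_commute)
  moreover have "tdist x y \<le> tdist y x"
    using tdist_le[of x y "- round (y - x)"] unfolding tdist_def by (simp add: abs_minus_commute)
  ultimately show ?thesis by simp
qed

lemma tdist_triangle: "tdist x z \<le> tdist x y + tdist y z"
proof -
  have "tdist x z \<le> \<bar>x - z - of_int (round (x - y) + round (y - z))\<bar>" by (rule tdist_le)
  also have "\<dots> \<le> tdist x y + tdist y z" unfolding tdist_def by simp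
  finally show ?thesis .
qed

lemma tdist_self[simp]: "tdist x x = 0" by (simp add: tdist_def)

lemma tdist_le_half: "tdist x y \<le> 1/2"
  unfolding tdist_def using of_int_round_ge[of "x-y"] of_int_round_le[of "x-y"] by linarith

lemma tdiam_bdd: "bdd_above (insert 0 {tdist x y | x y. x \<in> U \<and> y \<in> U})"
  apply (rule bdd_aboveI[of _ "1/2"]) using tdist_le_half by fastforce

lemma tdiam_nonneg: "0 \<le> tdiam U"
  unfolding tdiam_def by (rule cSup_upper[OF _ tdiam_bdd]) simp

lemma tdiam_ge: "x \<in> U \<Longrightarrow> y \<in> U \<Longrightarrow> tdist x y \<le> tdiam U"
  unfolding tdiam_def by (rule cSup_upper[OF _ tdiam_bdd]) auto

lemma tdiam_le: "0 \<le> b \<Longrightarrow> (\<And>x y. x \<in> U \<Longrightarrow> y \<in> U \<Longrightarrow> tdist x y \<le> b) \<Longrightarrow> tdiam U \<le> b"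
  unfolding tdiam_def by (rule cSup_least) auto

lemma tdiam_empty[simp]: "tdiam {} = 0"
  using tdiam_le[of 0 "{}"] tdiam_nonneg[of "{}"] by simp

lemma open_tnbhd: "open {x. \<exists>\<xi>\<in>A. tdist \<xi> x < s}"
proof -
  have "{x. \<exists>\<xi>\<in>A. tdist \<xi> x < s} = (\<Union>\<xi>\<in>A. \<Union>k::int. ball (\<xi> - of_int k) s)"
    apply (auto simp: tdist_less_iff dist_real_def abs_minus_commute algebra_simps) by blast+
  then show ?thesis by auto
qed

lemma open_tball: "open {x. tdist x c < s}"
  using open_tnbhd[of "{c}" s] by (simp add: tdist_sym)

lemma arc_measure:
  assumes "c \<in> torus" "0 \<le> s"
  shows "emeasure lborel ({x. tdist x c < s} \<inter> torus) \<le> ennreal (6 * s)"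
proof -
  let ?A = "\<lambda>k::int. greaterThanLessThan (c + of_int k - s) (c + of_int k + s)"
  have sub: "{x. tdist x c < s} \<inter> torus \<subseteq> (\<Union>k\<in>{-1,0,1}. ?A k)"
  proof
    fix x assume x: "x \<in> {x. tdist x c < s} \<inter> torus"
    let ?k = "round (x - c)"
    have d: "\<bar>x - c - of_int ?k\<bar> < s" using x by (simp add: tdist_def)
    have "x - c - 1/2 \<le> of_int ?k" "of_int ?k \<le> x - c + 1/2"
      using of_int_round_ge[of "x-c"] of_int_round_le[of "x-c"] by auto
    moreover have "-1 < x - c" "x - c < 1" using x assms(1) by (auto simp: torus_def)
    ultimately have "-2 < ?k" "?k < 2" by linarith+
    then have "?k \<in> {-1,0,1}" by auto
    moreover have "x \<in> ?A ?k" using d by auto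
    ultimately show "x \<in> (\<Union>k\<in>{-1,0,1}. ?A k)" by blast
  qed
  have "emeasure lborel ({x. tdist x c < s} \<inter> torus) \<le> emeasure lborel (\<Union>k\<in>{-1,0,1}. ?A k)"
    by (rule emeasure_mono[OF sub]) auto
  also have "\<dots> \<le> (\<Sum>k\<in>{-1,0,1}. emeasure lborel (?A k))"
    by (rule emeasure_subadditive_finite) auto
  also have "\<dots> = ennreal (6 * s)"
    using assms(2) ennreal_mult[of 3 "2 * s"] by (simp add: ennreal_plus[symmetric] del: ennreal_plus)
  finally show ?thesis .
qed

lemma tcball_diam_le: "0 \<le> \<rho> \<Longrightarrow> tdiam (tcball c \<rho>) \<le> 2*\<rho>"
  apply (rule tdiam_le)
   apply simp
  unfolding tcball_def
  by (metis (no_types, lifting) mem_Collect_eq mult_2 add_mono order_trans tdist_sym tdist_triangle)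

lemma tcball_diam_ge:
  assumes "c \<in> torus" "0 < \<rho>" "\<rho> < 1/2"
  shows "\<rho> \<le> tdiam (tcball c \<rho>)"
proof -
  define y where "y = (if c + \<rho> < 1 then c + \<rho> else c + \<rho> - 1)"
  have ty: "y \<in> torus" using assms by (auto simp: y_def torus_def)
  have "tdist y c = \<rho>"
  proof (cases "c + \<rho> < 1")
    case True
    then have "round (y - c) = 0" using assms by (intro round_unique') (auto simp: y_def)
    then show ?thesis using True assms by (simp add: tdist_def y_def)
  next
    case False
    then have "round (y - c) = -1" using assms by (intro round_unique') (auto simp: y_def)
    then show ?thesis using False assms by (simp add: tdist_def y_def)
  qed
  moreover have "y \<in> tcball c \<rho>" "c \<in> tcball c \<rho>"
    using ty assms \<open>tdist y c = \<rho>\<close> by (auto simp: tcball_def)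
  ultimately show ?thesis using tdiam_ge by metis
qed

lemma tcball_disj: "2*\<rho> < tdist a b \<Longrightarrow> tcball a \<rho> \<inter> tcball b \<rho> = {}"
proof (rule ccontr)
  assume "2*\<rho> < tdist a b" "tcball a \<rho> \<inter> tcball b \<rho> \<noteq> {}"
  then obtain x where "tdist x a \<le> \<rho>" "tdist x b \<le> \<rho>" by (auto simp: tcball_def)
  moreover have "tdist a b \<le> tdist a x + tdist x b" by (rule tdist_triangle)
  ultimately show False using \<open>2*\<rho> < tdist a b\<close> tdist_sym[of a x] by linarith
qed

lemma gauge_mono: "gauge g \<Longrightarrow> 0 \<le> a \<Longrightarrow> a \<le> b \<Longrightarrow> g a \<le> g b"
  unfolding gauge_def by (auto intro: mono_onD)

lemma gauge_pos: "gauge g \<Longrightarrow> 0 < a \<Longrightarrow> 0 < g a"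
  using gauge_mono[of g 0 a] unfolding gauge_def by force

lemma gauge_nonneg: "gauge g \<Longrightarrow> 0 \<le> a \<Longrightarrow> 0 \<le> g a"
  using gauge_mono[of g 0 a] unfolding gauge_def by force



definition tsep :: "real \<Rightarrow> real set \<Rightarrow> bool" where
  "tsep \<rho> F \<longleftrightarrow> (\<forall>x\<in>F. \<forall>y\<in>F. x \<noteq> y \<longrightarrow> 2*\<rho> < tdist x y)"

lemma sep_bound:
  assumes P: "packing_pre_delta g \<delta> G = ennreal P" and P0: "0 \<le> P" and G: "G \<subseteq> torus" and g: "gauge g"
    and r: "0 < \<rho>" "\<rho> < 1/2" "2*\<rho> < \<delta>"
    and F: "finite F" "F \<subseteq> G" "tsep \<rho> F"
  shows "real (card F) * g \<rho> \<le> P"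
proof -
  obtain e where e: "bij_betw e {0..<card F} F" using ex_bij_betw_nat_finite[OF F(1)] by blast
  let ?I = "{0..<card F}"
  let ?S = "{(I :: nat set, c :: nat \<Rightarrow> real, \<rho> :: nat \<Rightarrow> real).
              (\<forall>n\<in>I. c n \<in> G \<and> \<rho> n > 0 \<and> tdiam (tcball (c n) (\<rho> n)) < \<delta>) \<and>
              (\<forall>m\<in>I. \<forall>n\<in>I. m \<noteq> n \<longrightarrow> tcball (c m) (\<rho> m) \<inter> tcball (c n) (\<rho> n) = {})}"
  let ?f = "\<lambda>(I, c, \<rho>). (\<Sum>n. if n \<in> I then ennreal (g (tdiam (tcball (c n) (\<rho> n)))) else 0)"
  have eF: "\<And>n. n \<in> ?I \<Longrightarrow> e n \<in> F" using e by (auto simp: bij_betw_def)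
  have mem: "(?I, e, \<lambda>_. \<rho>) \<in> ?S"
  proof -
    have "\<forall>n\<in>?I. e n \<in> G \<and> \<rho> > 0 \<and> tdiam (tcball (e n) \<rho>) < \<delta>"
    proof
      fix n assume n: "n \<in> ?I"
      have "tdiam (tcball (e n) \<rho>) \<le> 2*\<rho>" using r by (intro tcball_diam_le) auto
      then show "e n \<in> G \<and> \<rho> > 0 \<and> tdiam (tcball (e n) \<rho>) < \<delta>"
        using eF[OF n] F(2) r by auto
    qed
    moreover have "\<forall>m\<in>?I. \<forall>n\<in>?I. m \<noteq> n \<longrightarrow> tcball (e m) \<rho> \<inter> tcball (e n) \<rho> = {}"
    proof (intro ballI impI)
      fix m n assume "m \<in> ?I" "n \<in> ?I" "m \<noteq> n"
      then have "e m \<noteq> e n" "e m \<in> F" "e n \<in> F" using e eF by (auto simp: bij_betw_def inj_on_def)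
      then show "tcball (e m) \<rho> \<inter> tcball (e n) \<rho> = {}"
        using F(3) by (intro tcball_disj) (auto simp: tsep_def)
    qed
    ultimately show ?thesis by simp
  qed
  have "?f (?I, e, \<lambda>_. \<rho>) = (\<Sum>n. if n \<in> ?I then ennreal (g (tdiam (tcball (e n) \<rho>))) else 0)"
    by simp
  also have "\<dots> = (\<Sum>n\<in>?I. if n \<in> ?I then ennreal (g (tdiam (tcball (e n) \<rho>))) else 0)"
    by (rule suminf_finite) auto
  also have "\<dots> = (\<Sum>n\<in>?I. ennreal (g (tdiam (tcball (e n) \<rho>))))"
    by simp
  also have "\<dots> \<ge> (\<Sum>n\<in>?I. ennreal (g \<rho>))"
  proof (rule sum_mono)
    fix n assume "n \<in> ?I"
    then have "e n \<in> torus" using eF F(2) G by auto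
    then have "\<rho> \<le> tdiam (tcball (e n) \<rho>)" using tcball_diam_ge r by auto
    then show "ennreal (g \<rho>) \<le> ennreal (g (tdiam (tcball (e n) \<rho>)))"
      using gauge_mono[OF g, of \<rho>] r by (auto intro: ennreal_leI)
  qed
  finally have "ennreal (real (card F) * g \<rho>) \<le> ?f (?I, e, \<lambda>_. \<rho>)"
    using gauge_nonneg[OF g, of \<rho>] r by (simp add: ennreal_mult ennreal_of_nat_eq_real_of_nat)
  also have "\<dots> \<le> packing_pre_delta g \<delta> G"
    unfolding packing_pre_delta_def by (rule SUP_upper[OF mem])
  finally show ?thesis using P P0 by simp
qed



lemma cover_exists:
  assumes bound: "\<And>F. finite F \<Longrightarrow> F \<subseteq> G \<Longrightarrow> tsep \<rho> F \<Longrightarrow> real (card F) * g \<rho> \<le> P"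
    and gp: "0 < g \<rho>" and r0: "0 \<le> \<rho>"
  shows "\<exists>F. finite F \<and> F \<subseteq> G \<and> real (card F) * g \<rho> \<le> P \<and> (\<forall>x\<in>G. \<exists>c\<in>F. tdist x c \<le> 2*\<rho>)"
proof -
  let ?S = "{card F | F. finite F \<and> F \<subseteq> G \<and> tsep \<rho> F}"
  have bnd: "\<forall>m\<in>?S. m \<le> nat \<lceil>P / g \<rho>\<rceil>"
  proof
    fix m assume "m \<in> ?S"
    then obtain F where F: "m = card F" "finite F" "F \<subseteq> G" "tsep \<rho> F" by blast
    then have "real m * g \<rho> \<le> P" using bound by simp
    then have "real m \<le> P / g \<rho>" using gp by (simp add: pos_le_divide_eq)
    then show "m \<le> nat \<lceil>P / g \<rho>\<rceil>" by linarith
  qed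
  then have fin: "finite ?S" using finite_nat_set_iff_bounded_le by blast
  have "0 \<in> ?S" by (rule CollectI, rule exI[of _ "{}"]) (simp add: tsep_def)
  then have "Max ?S \<in> ?S" using fin by (intro Max_in) auto
  then obtain F where F: "Max ?S = card F" "finite F" "F \<subseteq> G" "tsep \<rho> F" by blast
  have "\<forall>x\<in>G. \<exists>c\<in>F. tdist x c \<le> 2*\<rho>"
  proof (rule ccontr)
    assume "\<not> ?thesis"
    then obtain x where x: "x \<in> G" "\<forall>c\<in>F. 2*\<rho> < tdist x c" by (auto simp: not_le)
    have xF: "x \<notin> F" using x r0 by force
    have "tsep \<rho> (insert x F)"
      using F(4) x(2) tdist_sym unfolding tsep_def by auto
    then have "card (insert x F) \<in> ?S" using F x by blast
    then have "card (insert x F) \<le> Max ?S" using fin by (simp only: Max_ge)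
    then show False using F xF by simp
  qed
  then show ?thesis using F bound by blast
qed

lemma nbhd_measure:
  assumes P: "packing_pre_delta g \<delta> G = ennreal P" and P0: "0 \<le> P" and G: "G \<subseteq> torus" and g: "gauge g"
    and r: "0 < \<rho>" "\<rho> < 1/2" "2*\<rho> < \<delta>"
  shows "emeasure lborel ({x. \<exists>\<xi>\<in>G. tdist \<xi> x < \<rho>} \<inter> torus) \<le> ennreal (18 * P * \<rho> / g \<rho>)"
proof -
  have gp: "0 < g \<rho>" using gauge_pos[OF g r(1)] .
  obtain F where F: "finite F" "F \<subseteq> G" "real (card F) * g \<rho> \<le> P" "\<forall>x\<in>G. \<exists>c\<in>F. tdist x c \<le> 2*\<rho>"
    using cover_exists[of G \<rho> g P] sep_bound[OF P P0 G g r] gp r by fastforce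
  have sub: "{x. \<exists>\<xi>\<in>G. tdist \<xi> x < \<rho>} \<inter> torus \<subseteq> (\<Union>c\<in>F. {x. tdist x c < 3*\<rho>} \<inter> torus)"
  proof
    fix x assume "x \<in> {x. \<exists>\<xi>\<in>G. tdist \<xi> x < \<rho>} \<inter> torus"
    then obtain \<xi> where xi: "\<xi> \<in> G" "tdist \<xi> x < \<rho>" "x \<in> torus" by blast
    then obtain c where c: "c \<in> F" "tdist \<xi> c \<le> 2*\<rho>" using F(4) by blast
    have "tdist x c \<le> tdist x \<xi> + tdist \<xi> c" by (rule tdist_triangle)
    then have "tdist x c < 3*\<rho>" using xi c tdist_sym[of x \<xi>] by linarith
    then show "x \<in> (\<Union>c\<in>F. {x. tdist x c < 3*\<rho>} \<inter> torus)" using c xi by blast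
  qed
  have meas: "\<And>c. {x. tdist x c < 3*\<rho>} \<inter> torus \<in> sets lborel"
    using open_tball by (auto simp: torus_def intro!: sets.Int borel_open)
  have "emeasure lborel ({x. \<exists>\<xi>\<in>G. tdist \<xi> x < \<rho>} \<inter> torus)
      \<le> emeasure lborel (\<Union>c\<in>F. {x. tdist x c < 3*\<rho>} \<inter> torus)"
    by (rule emeasure_mono[OF sub], rule sets.finite_UN) (use meas F(1) in auto)
  also have "\<dots> \<le> (\<Sum>c\<in>F. emeasure lborel ({x. tdist x c < 3*\<rho>} \<inter> torus))"
    by (rule emeasure_subadditive_finite) (use meas F(1) in auto)
  also have "\<dots> \<le> (\<Sum>c\<in>F. ennreal (6 * (3*\<rho>)))"
    using F(2) G r by (intro sum_mono arc_measure) auto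
  also have "\<dots> = ennreal (real (card F) * (18 * \<rho>))"
    using r by (simp add: ennreal_mult ennreal_of_nat_eq_real_of_nat)
  also have "\<dots> \<le> ennreal (18 * P * \<rho> / g \<rho>)"
  proof (rule ennreal_leI)
    have "real (card F) \<le> P / g \<rho>" using F(3) gp by (simp add: pos_le_divide_eq)
    then have "real (card F) * (18 * \<rho>) \<le> P / g \<rho> * (18 * \<rho>)" using r by (intro mult_right_mono) auto
    then show "real (card F) * (18 * \<rho>) \<le> 18 * P * \<rho> / g \<rho>" by (simp add: mult_ac)
  qed
  finally show ?thesis .
qed



lemma AE_weighted:
  assumes M: "prob_space M" and B: "\<And>n. B n \<in> sets M" and w: "\<And>n. 0 \<le> w n"
    and b: "summable b" "\<And>n. 0 \<le> b n"
    and le: "\<And>n. emeasure M (B n) * ennreal (w n) \<le> ennreal (b n)"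
  shows "AE \<omega> in M. summable (\<lambda>n. indicator (B n) \<omega> * w n)"
proof -
  let ?f = "\<lambda>\<omega>. \<Sum>n. ennreal (w n) * indicator (B n) \<omega>"
  have fm: "?f \<in> borel_measurable M" using B by measurable
  have "integral\<^sup>N M ?f = (\<Sum>n. integral\<^sup>N M (\<lambda>\<omega>. ennreal (w n) * indicator (B n) \<omega>))"
    by (rule nn_integral_suminf) (use B in measurable)
  also have "\<dots> = (\<Sum>n. emeasure M (B n) * ennreal (w n))"
    using B by (simp add: nn_integral_cmult_indicator mult.commute)
  also have "\<dots> \<le> (\<Sum>n. ennreal (b n))"
    by (rule suminf_le) (use le in auto)
  also have "\<dots> = ennreal (suminf b)" using b by (simp add: suminf_ennreal2)
  finally have "integral\<^sup>N M ?f \<noteq> \<infinity>" using top.extremum_uniqueI by fastforce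
  then have "AE \<omega> in M. ?f \<omega> \<noteq> \<infinity>" by (rule nn_integral_noteq_infinite[OF fm])
  then show ?thesis
  proof (rule AE_mp, intro AE_I2 impI)
    fix \<omega> assume "?f \<omega> \<noteq> \<infinity>"
    moreover have "\<And>n. ennreal (w n) * indicator (B n) \<omega> = ennreal (indicator (B n) \<omega> * w n)"
      by (auto simp: indicator_def)
    ultimately have "(\<Sum>n. ennreal (indicator (B n) \<omega> * w n)) \<noteq> top" by simp
    then show "summable (\<lambda>n. indicator (B n) \<omega> * w n)"
      by (rule summable_suminf_not_top[rotated]) (use w in auto)
  qed
qed

lemma r_small:
  fixes r a :: "nat \<Rightarrow> real"
  assumes a: "summable a"
    and c: "\<And>\<epsilon>. 0 < \<epsilon> \<Longrightarrow> \<exists>c>0. \<forall>n. \<epsilon> \<le> r n \<longrightarrow> c \<le> a n"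
    and e: "0 < \<epsilon>"
  shows "\<exists>N. \<forall>n\<ge>N. r n < \<epsilon>"
proof -
  obtain c where c: "c > 0" "\<forall>n. \<epsilon> \<le> r n \<longrightarrow> c \<le> a n" using c[OF e] by blast
  have "a \<longlonglongrightarrow> 0" using a by (rule summable_LIMSEQ_zero)
  then obtain N where N: "\<forall>n\<ge>N. norm (a n - 0) < c" using c(1) by (meson LIMSEQ_D)
  show ?thesis
  proof (intro exI allI impI)
    fix n assume "n \<ge> N"
    then have "a n < c" using N by fastforce
    show "r n < \<epsilon>"
    proof (rule ccontr)
      assume "\<not> r n < \<epsilon>"
      then have "c \<le> a n" using c(2) by simp
      then show False using \<open>a n < c\<close> by simp
    qed
  qed
qed

lemma hausdorff_zero:
  fixes x r :: "nat \<Rightarrow> real"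
  assumes h: "gauge h"
    and sm: "summable (\<lambda>n. indicator (B n) \<omega> * h (2 * r n))"
    and rs: "\<And>\<epsilon>. 0 < \<epsilon> \<Longrightarrow> \<exists>N. \<forall>n\<ge>N. r n < \<epsilon>"
    and r: "\<And>n. 0 < r n"
    and hit: "\<And>n \<xi>. \<xi> \<in> G \<Longrightarrow> tdist \<xi> (x n) < r n \<Longrightarrow> \<omega> \<in> B n"
  shows "hausdorff_measure h (limsup_set x r \<inter> G) = 0"
proof -
  let ?a = "\<lambda>n. indicator (B n) \<omega> * h (2 * r n)"
  have a0: "\<And>n. 0 \<le> ?a n" using gauge_nonneg[OF h] r by (simp add: less_imp_le)
  have "(INF U \<in> {U :: nat \<Rightarrow> real set.
                 (\<forall>i. U i \<subseteq> torus \<and> tdiam (U i) \<le> \<delta>) \<and> (limsup_set x r \<inter> G) \<subseteq> (\<Union>i. U i)}.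
        (\<Sum>i. ennreal (h (tdiam (U i))))) = 0" if d: "\<delta> > 0" for \<delta>
  proof (rule antisym[OF ennreal_le_epsilon], simp_all)
    fix \<epsilon> :: real assume e: "0 < \<epsilon>"
    obtain N1 where N1: "\<forall>n\<ge>N1. r n < \<delta>/2" using rs[of "\<delta>/2"] d by auto
    obtain N2 where N2: "\<forall>n\<ge>N2. norm (\<Sum>i. ?a (i + n)) < \<epsilon>" using suminf_exist_split[OF e sm] by blast
    define N where "N = max N1 N2"
    define U where "U i = (if \<omega> \<in> B (i+N) then {y \<in> torus. tdist y (x (i+N)) < r (i+N)} else {})" for i
    have diam: "tdiam (U i) \<le> 2 * r (i+N)" if "\<omega> \<in> B (i+N)" for i
    proof (rule tdiam_le)
      show "0 \<le> 2 * r (i + N)" using r[of "i+N"] by simp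
      fix y z assume "y \<in> U i" "z \<in> U i"
      then have "tdist y (x (i+N)) < r (i+N)" "tdist z (x (i+N)) < r (i+N)" using that by (auto simp: U_def)
      moreover have "tdist y z \<le> tdist y (x (i+N)) + tdist (x (i+N)) z" by (rule tdist_triangle)
      ultimately show "tdist y z \<le> 2 * r (i + N)" using tdist_sym[of z "x (i+N)"] by linarith
    qed
    have Umem: "U \<in> {U :: nat \<Rightarrow> real set.
                 (\<forall>i. U i \<subseteq> torus \<and> tdiam (U i) \<le> \<delta>) \<and> (limsup_set x r \<inter> G) \<subseteq> (\<Union>i. U i)}"
    proof (safe)
      fix i y assume "y \<in> U i" then show "y \<in> torus" by (auto simp: U_def split: if_splits)
    next
      fix i show "tdiam (U i) \<le> \<delta>"
      proof (cases "\<omega> \<in> B (i+N)")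
        case True
        have "i + N \<ge> N1" by (simp add: N_def)
        then show ?thesis using diam[OF True] N1 by fastforce
      next
        case False then show ?thesis using d by (simp add: U_def)
      qed
    next
      fix \<xi> assume \<xi>: "\<xi> \<in> limsup_set x r" "\<xi> \<in> G"
      then have "infinite {n. tdist \<xi> (x n) < r n}" "\<xi> \<in> torus" by (auto simp: limsup_set_def)
      then obtain n where n: "n \<ge> N" "tdist \<xi> (x n) < r n" by (auto simp: infinite_nat_iff_unbounded_le)
      then have "\<omega> \<in> B n" using hit \<xi>(2) by blast
      then have "\<xi> \<in> U (n - N)" using n \<open>\<xi> \<in> torus\<close> by (simp add: U_def)
      then show "\<xi> \<in> (\<Union>i. U i)" by blast
    qed
    have trm: "ennreal (h (tdiam (U i))) \<le> ennreal (?a (i + N))" for i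
    proof (cases "\<omega> \<in> B (i+N)")
      case True
      then have "h (tdiam (U i)) \<le> h (2 * r (i+N))"
        using diam[OF True] by (intro gauge_mono[OF h] tdiam_nonneg)
      then show ?thesis using True by (intro ennreal_leI) simp
    next
      case False then show ?thesis using h by (simp add: U_def gauge_def)
    qed
    have "(INF U \<in> {U :: nat \<Rightarrow> real set.
                 (\<forall>i. U i \<subseteq> torus \<and> tdiam (U i) \<le> \<delta>) \<and> (limsup_set x r \<inter> G) \<subseteq> (\<Union>i. U i)}.
        (\<Sum>i. ennreal (h (tdiam (U i))))) \<le> (\<Sum>i. ennreal (h (tdiam (U i))))"
      by (rule INF_lower[OF Umem])
    also have "\<dots> \<le> (\<Sum>i. ennreal (?a (i + N)))" by (rule suminf_le) (use trm in auto)
    also have "\<dots> = ennreal (\<Sum>i. ?a (i + N))"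
      using a0 sm by (intro suminf_ennreal2) (auto intro: summable_ignore_initial_segment)
    also have "\<dots> \<le> ennreal \<epsilon>"
    proof (rule ennreal_leI)
      have "N \<ge> N2" by (simp add: N_def)
      then show "(\<Sum>i. ?a (i + N)) \<le> \<epsilon>" using N2 by fastforce
    qed
    finally show "(INF U \<in> {U :: nat \<Rightarrow> real set.
                 (\<forall>i. U i \<subseteq> torus \<and> tdiam (U i) \<le> \<delta>) \<and> (limsup_set x r \<inter> G) \<subseteq> (\<Union>i. U i)}.
        (\<Sum>i. ennreal (h (tdiam (U i))))) \<le> ennreal \<epsilon>" .
  qed
  then show ?thesis unfolding hausdorff_measure_def by simp
qed



theorem theorem3p1:
  fixes M :: "'a measure" and X :: "nat \<Rightarrow> 'a \<Rightarrow> real" and r :: "nat \<Rightarrow> real"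
    and G :: "real set" and g :: "real \<Rightarrow> real"
  assumes "prob_space M"
    and "\<And>n. distributed M lborel (X n) (indicator torus :: real \<Rightarrow> ennreal)"
    and "\<And>n. 0 < r n \<and> r n \<le> 1"
    and "G \<noteq> {}" and "torus_compact G"
    and "gauge g" and "doubling g"
    and "packing_premeasure g G < \<infinity>"
  shows "(summable (\<lambda>n. r n / g (r n)) \<longrightarrow>
            (AE \<omega> in M. limsup_set (\<lambda>n. X n \<omega>) r \<inter> G = {}))
       \<and> (\<forall>h. gauge h \<and> doubling h \<and> summable (\<lambda>n. h (r n) * r n / g (r n)) \<longrightarrow>
            (AE \<omega> in M. hausdorff_measure h (limsup_set (\<lambda>n. X n \<omega>) r \<inter> G) = 0))"
proof -
  interpret prob_space M by (rule assms(1))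
  have g: "gauge g" by (rule assms(6))
  have rpos: "\<And>n. 0 < r n" and rle: "\<And>n. r n \<le> 1" using assms(3) by auto
  have G: "G \<subseteq> torus" using assms(5) by (simp add: torus_compact_def)
  obtain \<delta> where \<delta>: "\<delta> > 0" "packing_pre_delta g \<delta> G < \<infinity>"
    using assms(8) unfolding packing_premeasure_def by (auto simp: INF_less_iff)
  define P where "P = enn2real (packing_pre_delta g \<delta> G)"
  have PP: "packing_pre_delta g \<delta> G = ennreal P" and P0: "0 \<le> P"
    using \<delta>(2) by (auto simp: P_def)
  define S where "S n = {x. \<exists>\<xi>\<in>G. tdist \<xi> x < r n}" for n
  define B where "B n = X n -` S n \<inter> space M" for n
  have Xm: "\<And>n. X n \<in> measurable M lborel" using distributed_measurable[OF assms(2)] by blast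
  have Sm: "\<And>n. S n \<in> sets lborel" unfolding S_def using open_tnbhd by (simp add: borel_open)
  have Bm: "\<And>n. B n \<in> sets M" unfolding B_def using Xm Sm by (rule measurable_sets)
  have EB: "emeasure M (B n) = emeasure lborel (S n \<inter> torus)" for n
  proof -
    have "emeasure M (B n) = (\<integral>\<^sup>+x. indicator torus x * indicator (S n) x \<partial>lborel)"
      unfolding B_def by (rule distributed_emeasure[OF assms(2) Sm])
    also have "\<dots> = (\<integral>\<^sup>+x. indicator (S n \<inter> torus) x \<partial>lborel)"
      by (intro nn_integral_cong) (auto simp: indicator_def)
    also have "\<dots> = emeasure lborel (S n \<inter> torus)"
      using Sm by (intro nn_integral_indicator) (auto simp: torus_def)
    finally show ?thesis .
  qed
  have Bbound: "emeasure M (B n) \<le> ennreal (18 * P * r n / g (r n))" if "r n < 1/2" "2 * r n < \<delta>" for n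
    unfolding EB S_def using nbhd_measure[OF PP P0 G g rpos that] .
  have hit: "\<omega> \<in> B n" if "\<xi> \<in> G" "tdist \<xi> (X n \<omega>) < r n" "\<omega> \<in> space M" for n \<xi> \<omega>
    using that by (auto simp: B_def S_def)
  have g1: "g (r n) \<le> g 1" "0 < g (r n)" for n
    using gauge_mono[OF g, of "r n" 1] rpos[of n] rle[of n] gauge_pos[OF g rpos[of n]] by auto
  have N0: "\<exists>N. \<forall>n\<ge>N. r n < 1/2 \<and> 2 * r n < \<delta>" if rs: "\<And>\<epsilon>. 0 < \<epsilon> \<Longrightarrow> \<exists>N. \<forall>n\<ge>N. r n < \<epsilon>"
  proof -
    obtain N where N: "\<forall>n\<ge>N. r n < min (1/2) (\<delta>/2)" using rs[of "min (1/2) (\<delta>/2)"] \<delta>(1) by auto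
    show ?thesis
    proof (intro exI[of _ N] allI impI)
      fix n assume "n \<ge> N"
      then have "r n < 1/2" "r n < \<delta>/2" using N by auto
      then show "r n < 1/2 \<and> 2 * r n < \<delta>" by linarith
    qed
  qed
  have part1: "AE \<omega> in M. limsup_set (\<lambda>n. X n \<omega>) r \<inter> G = {}"
    if sum1: "summable (\<lambda>n. r n / g (r n))"
  proof -
    have rs: "\<exists>N. \<forall>n\<ge>N. r n < \<epsilon>" if "0 < \<epsilon>" for \<epsilon>
    proof (rule r_small[OF sum1 _ that])
      fix \<epsilon> :: real assume e: "0 < \<epsilon>"
      show "\<exists>c>0. \<forall>n. \<epsilon> \<le> r n \<longrightarrow> c \<le> r n / g (r n)"
      proof (intro exI[of _ "\<epsilon> / g 1"] conjI allI impI)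
        show "0 < \<epsilon> / g 1" using e gauge_pos[OF g, of 1] by simp
        fix n assume "\<epsilon> \<le> r n"
        then show "\<epsilon> / g 1 \<le> r n / g (r n)" using g1[of n] rpos[of n] by (intro frac_le) auto
      qed
    qed
    obtain N where N: "\<forall>n\<ge>N. r n < 1/2 \<and> 2 * r n < \<delta>" using N0 rs by blast
    define b where "b n = (if n < N then 1 else 18 * P * (r n / g (r n)))" for n
    have bs: "summable b"
    proof -
      have "eventually (\<lambda>n. b n = 18 * P * (r n / g (r n))) sequentially"
        unfolding b_def eventually_sequentially by (intro exI[of _ N]) auto
      then have "summable b = summable (\<lambda>n. 18 * P * (r n / g (r n)))" by (rule summable_cong)
      then show ?thesis using summable_mult[OF sum1, of "18 * P"] by simp
    qed
    have b0: "0 \<le> b n" for n using P0 g1[of n] rpos[of n] by (simp add: b_def)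
    have le: "emeasure M (B n) * ennreal 1 \<le> ennreal (b n)" for n
    proof (cases "n < N")
      case True then show ?thesis by (simp add: b_def emeasure_le_1)
    next
      case False then show ?thesis using Bbound[of n] N by (simp add: b_def)
    qed
    have "AE \<omega> in M. summable (\<lambda>n. indicator (B n) \<omega> * (1::real))"
      by (rule AE_weighted[OF assms(1) Bm _ bs b0 le]) simp
    from this AE_space show ?thesis
    proof eventually_elim
        case (elim \<omega>)
        then have a: "\<omega> \<in> space M \<and> summable (\<lambda>n. indicator (B n) \<omega> * (1::real))" by simp
        then have "(\<lambda>n. indicator (B n) \<omega> * (1::real)) \<longlonglongrightarrow> 0" by (intro summable_LIMSEQ_zero) auto
        then obtain N' where N': "\<forall>n\<ge>N'. norm (indicator (B n) \<omega> * (1::real) - 0) < 1"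
          by (meson LIMSEQ_D zero_less_one)
        have nB: "\<omega> \<notin> B n" if "n \<ge> N'" for n using N' that by (fastforce simp: indicator_def)
        show "limsup_set (\<lambda>n. X n \<omega>) r \<inter> G = {}"
        proof (rule ccontr)
          assume "limsup_set (\<lambda>n. X n \<omega>) r \<inter> G \<noteq> {}"
          then obtain \<xi> where \<xi>: "\<xi> \<in> G" "infinite {n. tdist \<xi> (X n \<omega>) < r n}"
            by (auto simp: limsup_set_def)
          then obtain n where "n \<ge> N'" "tdist \<xi> (X n \<omega>) < r n" by (auto simp: infinite_nat_iff_unbounded_le)
          then show False using hit[OF \<xi>(1)] a nB by blast
        qed
    qed
  qed
  have part2: "AE \<omega> in M. hausdorff_measure h (limsup_set (\<lambda>n. X n \<omega>) r \<inter> G) = 0"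
    if h: "gauge h" "doubling h" and sum2: "summable (\<lambda>n. h (r n) * r n / g (r n))" for h
  proof -
    have rs: "\<exists>N. \<forall>n\<ge>N. r n < \<epsilon>" if "0 < \<epsilon>" for \<epsilon>
    proof (rule r_small[OF sum2 _ that])
      fix \<epsilon> :: real assume e: "0 < \<epsilon>"
      show "\<exists>c>0. \<forall>n. \<epsilon> \<le> r n \<longrightarrow> c \<le> h (r n) * r n / g (r n)"
      proof (intro exI[of _ "h \<epsilon> * \<epsilon> / g 1"] conjI allI impI)
        show "0 < h \<epsilon> * \<epsilon> / g 1" using e gauge_pos[OF g, of 1] gauge_pos[OF h(1) e] by simp
        fix n assume en: "\<epsilon> \<le> r n"
        have "h \<epsilon> \<le> h (r n)" using gauge_mono[OF h(1)] e en by simp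
        then have "h \<epsilon> * \<epsilon> \<le> h (r n) * r n" using en e gauge_pos[OF h(1) e] by (intro mult_mono) auto
        then show "h \<epsilon> * \<epsilon> / g 1 \<le> h (r n) * r n / g (r n)"
          using g1[of n] rpos[of n] gauge_pos[OF h(1) rpos[of n]] by (intro frac_le) auto
      qed
    qed
    obtain N where N: "\<forall>n\<ge>N. r n < 1/2 \<and> 2 * r n < \<delta>" using N0 rs by blast
    obtain C where C: "C > 0" "\<And>t. t > 0 \<Longrightarrow> h (2 * t) \<le> C * h t" using h(2) by (auto simp: doubling_def)
    define w where "w n = h (2 * r n)" for n
    have w0: "0 \<le> w n" for n using gauge_nonneg[OF h(1)] rpos[of n] by (simp add: w_def)
    define b where "b n = (if n < N then w n else 18 * P * C * (h (r n) * r n / g (r n)))" for n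
    have bs: "summable b"
    proof -
      have "eventually (\<lambda>n. b n = 18 * P * C * (h (r n) * r n / g (r n))) sequentially"
        unfolding b_def eventually_sequentially by (intro exI[of _ N]) auto
      then have "summable b = summable (\<lambda>n. 18 * P * C * (h (r n) * r n / g (r n)))" by (rule summable_cong)
      then show ?thesis using summable_mult[OF sum2, of "18 * P * C"] by simp
    qed
    have b0: "0 \<le> b n" for n
      using P0 g1[of n] rpos[of n] C(1) w0[of n] gauge_nonneg[OF h(1), of "r n"] by (simp add: b_def)
    have le: "emeasure M (B n) * ennreal (w n) \<le> ennreal (b n)" for n
    proof (cases "n < N")
      case True
      have "emeasure M (B n) * ennreal (w n) \<le> 1 * ennreal (w n)"
        by (intro mult_right_mono emeasure_le_1) auto
      then show ?thesis using True by (simp add: b_def)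
    next
      case False
      have hn: "0 \<le> h (r n)" using gauge_nonneg[OF h(1)] rpos[of n] by simp
      have "emeasure M (B n) * ennreal (w n) \<le> ennreal (18 * P * r n / g (r n)) * ennreal (C * h (r n))"
        using Bbound[of n] N False C(2)[OF rpos[of n]] by (intro mult_mono ennreal_leI) (auto simp: w_def)
      also have "\<dots> = ennreal (18 * P * r n / g (r n) * (C * h (r n)))"
        using P0 g1[of n] rpos[of n] C(1) hn by (intro ennreal_mult[symmetric]) auto
      also have "\<dots> = ennreal (b n)" using False by (simp add: b_def mult_ac)
      finally show ?thesis .
    qed
    have "AE \<omega> in M. summable (\<lambda>n. indicator (B n) \<omega> * w n)"
      by (rule AE_weighted[OF assms(1) Bm w0 bs b0 le])
    from this AE_space show ?thesis
    proof eventually_elim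
      case (elim \<omega>)
      then have a: "\<omega> \<in> space M \<and> summable (\<lambda>n. indicator (B n) \<omega> * w n)" by simp
      show "hausdorff_measure h (limsup_set (\<lambda>n. X n \<omega>) r \<inter> G) = 0"
        by (rule hausdorff_zero[OF h(1), of B \<omega>]) (use a rs rpos hit in \<open>auto simp: w_def\<close>)
    qed
  qed
  show ?thesis using part1 part2 by blast
qed

end
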